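(* Let $A$ be a finite set, $\Omega=A^{\mathbb{N}}$, and $\tilde\mu,\mu\in\Delta(\Omega)$ be such that $\tilde\mu$ weakly merges to $\mu$. Then for every $\epsilon>0$ there exists $N_0$ such that for every $N>N_0$ and every decision problem (finite decision set $D$ and payoff function $r:A\times D\to[0,1]$), every strategy that is $0$-optimal for $N$ periods under $\tilde\mu$ is $\epsilon$-optimal for $N$ periods under $\mu$.
   Context: For $\nu\in\Delta(\Omega)$ and $(a_0,\dots,a_{n-1})$ of positive $\nu$-probability, $\nu(\cdot\mid a_0,\dots,a_{n-1})\in\Delta(A)$ is the conditional distribution of the next outcome $a_n$. $\|p-q\|=\max_{a\in A}|p[a]-q[a]|$. $\tilde\mu$ weakly merges to $\mu$ if for $\mu$-a.e. $\omega=(a_0,a_1,\dots)$, $\frac1N\sum_{n=0}^{N-1}\|\tilde\mu(\cdot\mid a_0,\dots,a_{n-1})-\mu(\cdot\mid a_0,\dots,a_{n-1})\|\to0$. A strategy is a map $f:\bigcup_{n\ge0}A^n\to D$. For a belief $\nu$, $V_N^\nu(f)=\frac1N\int\sum_{n=0}^{N-1}r(a_n,f(a_0,\dots,a_{n-1}))\,\mathrm d\nu$. A strategy $f^*$ is $\epsilon$-optimal for $N$ periods under $\nu$ if $V_N^\nu(f)\le V_N^\nu(f^* )+\epsilon$ for every strategy $f$. *)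

theory Defs
  imports "HOL-Probability.Probability"
begin

definition Omega_M :: "(nat \<Rightarrow> 'a) measure" where
  "Omega_M = PiM UNIV (\<lambda>_::nat. count_space (UNIV::'a set))"

definition Delta_Omega :: "(nat \<Rightarrow> 'a) measure \<Rightarrow> bool" where
  "Delta_Omega \<nu> \<longleftrightarrow> prob_space \<nu> \<and> sets \<nu> = sets Omega_M"

definition hist :: "nat \<Rightarrow> (nat \<Rightarrow> 'a) \<Rightarrow> 'a list" where
  "hist n \<omega> = map \<omega> [0..<n]"

definition cyl :: "'a list \<Rightarrow> (nat \<Rightarrow> 'a) set" where
  "cyl xs = {\<omega> \<in> space (Omega_M :: (nat \<Rightarrow> 'a) measure). \<forall>i<length xs. \<omega> i = xs ! i}"

text \<open>Conditional distribution of the next outcome given history xs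
  (with the convention x/0 = 0 when the history has probability zero).\<close>
definition cond :: "(nat \<Rightarrow> 'a) measure \<Rightarrow> 'a list \<Rightarrow> 'a \<Rightarrow> real" where
  "cond \<nu> xs a = measure \<nu> (cyl (xs @ [a])) / measure \<nu> (cyl xs)"

definition supdist :: "('a::finite \<Rightarrow> real) \<Rightarrow> ('a \<Rightarrow> real) \<Rightarrow> real" where
  "supdist p q = Max (range (\<lambda>a. \<bar>p a - q a\<bar>))"

definition weakly_merges :: "(nat \<Rightarrow> 'a::finite) measure \<Rightarrow> (nat \<Rightarrow> 'a) measure \<Rightarrow> bool" where
  "weakly_merges \<mu>t \<mu> \<longleftrightarrow>
     (AE \<omega> in \<mu>. (\<lambda>N. (1 / real N) * (\<Sum>n<N. supdist (cond \<mu>t (hist n \<omega>)) (cond \<mu> (hist n \<omega>))))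
                    \<longlonglongrightarrow> 0)"

text \<open>Strategy with values in the decision set D (encoded as a set of naturals).\<close>
definition strategy :: "nat set \<Rightarrow> ('a list \<Rightarrow> nat) \<Rightarrow> bool" where
  "strategy D f \<longleftrightarrow> (\<forall>h. f h \<in> D)"

definition V :: "nat \<Rightarrow> (nat \<Rightarrow> 'a) measure \<Rightarrow> ('a \<Rightarrow> nat \<Rightarrow> real) \<Rightarrow> ('a list \<Rightarrow> nat) \<Rightarrow> real" where
  "V N \<nu> r f = (1 / real N) * (\<integral>\<omega>. (\<Sum>n<N. r (\<omega> n) (f (hist n \<omega>))) \<partial>\<nu>)"

definition eps_optimal :: "real \<Rightarrow> nat \<Rightarrow> (nat \<Rightarrow> 'a) measure \<Rightarrow> nat set \<Rightarrow> ('a \<Rightarrow> nat \<Rightarrow> real)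
    \<Rightarrow> ('a list \<Rightarrow> nat) \<Rightarrow> bool" where
  "eps_optimal \<epsilon> N \<nu> D r fs \<longleftrightarrow> (\<forall>f. strategy D f \<longrightarrow> V N \<nu> r f \<le> V N \<nu> r fs + \<epsilon>)"

end

theory Submission
  imports Defs
begin

lemma space_Omega: "space Omega_M = UNIV"
  by (simp add: Omega_M_def space_PiM)

lemma length_hist[simp]: "length (hist n \<omega>) = n"
  by (simp add: hist_def)

lemma hist_Suc: "hist (Suc n) \<omega> = hist n \<omega> @ [\<omega> n]"
  by (simp add: hist_def)

lemma cyl_iff: "\<omega> \<in> cyl xs \<longleftrightarrow> hist (length xs) \<omega> = xs"
proof -
  have "hist (length xs) \<omega> = xs \<longleftrightarrow> (\<forall>i<length xs. \<omega> i = xs ! i)"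
    unfolding list_eq_iff_nth_eq by (simp add: hist_def)
  then show ?thesis unfolding cyl_def space_Omega by blast
qed

lemma cyl_sets: "cyl xs \<in> sets Omega_M"
proof -
  have 1: "{\<omega>\<in>space Omega_M. \<omega> i = xs!i} \<in> sets Omega_M" for i
  proof -
    have "{\<omega>\<in>space Omega_M. \<omega> i \<in> {xs!i}} \<in> sets Omega_M"
      unfolding Omega_M_def by (rule sets_Collect_single) auto
    moreover have "{\<omega>\<in>space Omega_M. \<omega> i \<in> {xs!i}} = {\<omega>\<in>space Omega_M. \<omega> i = xs!i}" by blast
    ultimately show ?thesis by metis
  qed
  have 2: "{\<omega>\<in>space Omega_M. \<forall>i\<in>{..<length xs}. \<omega> i = xs!i} \<in> sets Omega_M"
    by (rule sets.sets_Collect_finite_All[OF 1]) (rule finite_lessThan)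
  have "cyl xs = {\<omega>\<in>space Omega_M. \<forall>i\<in>{..<length xs}. \<omega> i = xs!i}"
    unfolding cyl_def by blast
  with 2 show ?thesis by metis
qed

lemma cyl_append_subset: "cyl (xs @ ys) \<subseteq> cyl xs"
  unfolding cyl_def by (auto simp: nth_append)

definition L :: "nat \<Rightarrow> 'a list set" where "L n = {xs. length xs = n}"

lemma finite_L: "finite (L n :: ('a::finite) list set)"
  unfolding L_def using finite_lists_length_eq[of "UNIV::'a set" n] by simp

lemma hist_in_L: "hist n \<omega> \<in> L n" by (simp add: L_def)

lemma G_hist_sum:
  fixes G :: "('a::finite) list \<Rightarrow> real"
  shows "G (hist m \<omega>) = (\<Sum>xs\<in>L m. G xs * indicator (cyl xs) \<omega>)"
proof -
  have "(\<Sum>xs\<in>L m. G xs * indicator (cyl xs) \<omega>) = (\<Sum>xs\<in>L m. if hist m \<omega> = xs then G xs else 0)"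
    by (intro sum.cong) (auto simp: L_def cyl_iff indicator_def)
  also have "\<dots> = G (hist m \<omega>)" using hist_in_L[of m \<omega>] by (simp add: sum.delta finite_L)
  finally show ?thesis by simp
qed

lemma G2_hist_sum:
  fixes g :: "('a::finite) list \<Rightarrow> 'a \<Rightarrow> real"
  shows "g (hist n \<omega>) (\<omega> n) = (\<Sum>p\<in>L n \<times> UNIV. g (fst p) (snd p) * indicator (cyl (fst p @ [snd p])) \<omega>)"
proof -
  have "(\<Sum>p\<in>L n \<times> UNIV. g (fst p) (snd p) * indicator (cyl (fst p @ [snd p])) \<omega>)
     = (\<Sum>p\<in>L n \<times> UNIV. if (hist n \<omega>, \<omega> n) = p then g (fst p) (snd p) else 0)"
    by (intro sum.cong) (auto simp: L_def cyl_iff indicator_def hist_Suc)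
  also have "\<dots> = g (hist n \<omega>) (\<omega> n)" using hist_in_L[of n \<omega>]
    by (simp add: sum.delta' finite_L)
  finally show ?thesis by simp
qed

lemma Delta_sets: "Delta_Omega \<nu> \<Longrightarrow> sets \<nu> = sets Omega_M"
  by (simp add: Delta_Omega_def)

lemma Delta_prob: "Delta_Omega \<nu> \<Longrightarrow> prob_space \<nu>"
  by (simp add: Delta_Omega_def)

lemma int_simple:
  fixes c :: "'i \<Rightarrow> real"
  assumes D: "Delta_Omega \<nu>" and I: "finite I" and S: "\<And>i. i \<in> I \<Longrightarrow> S i \<in> sets Omega_M"
  shows "integrable \<nu> (\<lambda>\<omega>. \<Sum>i\<in>I. c i * indicator (S i) \<omega>)"
    and "(\<integral>\<omega>. (\<Sum>i\<in>I. c i * indicator (S i) \<omega>) \<partial>\<nu>) = (\<Sum>i\<in>I. c i * measure \<nu> (S i))"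
proof -
  interpret prob_space \<nu> using Delta_prob[OF D] .
  have S': "\<And>i. i \<in> I \<Longrightarrow> S i \<in> sets \<nu>" using S Delta_sets[OF D] by simp
  have int: "\<And>i. i \<in> I \<Longrightarrow> integrable \<nu> (\<lambda>\<omega>. c i * indicator (S i) \<omega>)"
    using S' by (auto intro!: integrable_mult_right integrable_real_indicator simp: less_top[symmetric])
  then show "integrable \<nu> (\<lambda>\<omega>. \<Sum>i\<in>I. c i * indicator (S i) \<omega>)" by auto
  have "(\<integral>\<omega>. (\<Sum>i\<in>I. c i * indicator (S i) \<omega>) \<partial>\<nu>) = (\<Sum>i\<in>I. \<integral>\<omega>. c i * indicator (S i) \<omega> \<partial>\<nu>)"
    by (rule Bochner_Integration.integral_sum[where I=I and f="\<lambda>i \<omega>. c i * indicator (S i) \<omega>"]) (rule int)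
  also have "\<dots> = (\<Sum>i\<in>I. c i * measure \<nu> (S i))"
    using S' by (intro sum.cong) (auto simp: sets.Int_space_eq2)
  finally show "(\<integral>\<omega>. (\<Sum>i\<in>I. c i * indicator (S i) \<omega>) \<partial>\<nu>) = (\<Sum>i\<in>I. c i * measure \<nu> (S i))" .
qed

lemma int_G:
  fixes G :: "('a::finite) list \<Rightarrow> real"
  assumes D: "Delta_Omega \<nu>"
  shows "integrable \<nu> (\<lambda>\<omega>. G (hist m \<omega>))"
    and "(\<integral>\<omega>. G (hist m \<omega>) \<partial>\<nu>) = (\<Sum>xs\<in>L m. G xs * measure \<nu> (cyl xs))"
  using int_simple[OF D finite_L, where S=cyl and c=G] by (simp_all add: cyl_sets flip: G_hist_sum)

lemma int_G2:
  fixes g :: "('a::finite) list \<Rightarrow> 'a \<Rightarrow> real"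
  assumes D: "Delta_Omega \<nu>"
  shows "integrable \<nu> (\<lambda>\<omega>. g (hist n \<omega>) (\<omega> n))"
    and "(\<integral>\<omega>. g (hist n \<omega>) (\<omega> n) \<partial>\<nu>) = (\<Sum>h\<in>L n. \<Sum>a\<in>UNIV. g h a * measure \<nu> (cyl (h @ [a])))"
proof -
  note fin = finite_cartesian_product[OF finite_L[of n] finite_class.finite_UNIV]
  note * = int_simple[OF D fin, where S="\<lambda>p. cyl (fst p @ [snd p])" and c="\<lambda>p. g (fst p) (snd p)"]
  show "integrable \<nu> (\<lambda>\<omega>. g (hist n \<omega>) (\<omega> n))"
    using *(1) by (simp add: cyl_sets flip: G2_hist_sum)
  show "(\<integral>\<omega>. g (hist n \<omega>) (\<omega> n) \<partial>\<nu>) = (\<Sum>h\<in>L n. \<Sum>a\<in>UNIV. g h a * measure \<nu> (cyl (h @ [a])))"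
    using *(2) by (simp add: cyl_sets sum.cartesian_product case_prod_beta flip: G2_hist_sum)
qed

lemma V_eq:
  assumes D: "Delta_Omega (\<nu> :: (nat \<Rightarrow> 'a::finite) measure)"
  shows "V N \<nu> r f = (1 / real N) * (\<Sum>n<N. \<Sum>h\<in>L n. \<Sum>a\<in>UNIV. r a (f h) * measure \<nu> (cyl (h @ [a])))"
proof -
  have "(\<integral>\<omega>. (\<Sum>n<N. r (\<omega> n) (f (hist n \<omega>))) \<partial>\<nu>) = (\<Sum>n<N. \<integral>\<omega>. r (\<omega> n) (f (hist n \<omega>)) \<partial>\<nu>)"
    by (rule Bochner_Integration.integral_sum[where I="{..<N}" and f="\<lambda>(n::nat) (\<omega>::nat \<Rightarrow> 'a). r (\<omega> n) (f (hist n \<omega>)) :: real"]) (rule int_G2(1)[OF D, of "\<lambda>h a. r a (f h)"])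
  also have "\<dots> = (\<Sum>n<N. \<Sum>h\<in>L n. \<Sum>a\<in>UNIV. r a (f h) * measure \<nu> (cyl (h @ [a])))"
    by (intro sum.cong refl) (rule int_G2(2)[OF D, of "\<lambda>h a. r a (f h)"])
  finally show ?thesis by (simp add: V_def)
qed


lemma meas_mono:
  assumes D: "Delta_Omega \<nu>"
  shows "measure \<nu> (cyl (h @ [a])) \<le> measure \<nu> (cyl h)"
proof -
  interpret prob_space \<nu> using Delta_prob[OF D] .
  show ?thesis
    by (rule finite_measure_mono[OF cyl_append_subset]) (simp add: Delta_sets[OF D] cyl_sets)
qed

lemma meas_cond:
  assumes D: "Delta_Omega \<nu>"
  shows "measure \<nu> (cyl (h @ [a])) = measure \<nu> (cyl h) * cond \<nu> h a"
proof (cases "measure \<nu> (cyl h) = 0")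
  case True
  then show ?thesis using meas_mono[OF D, of h a] measure_nonneg[of \<nu> "cyl (h @ [a])"] by simp
next
  case False
  then show ?thesis by (simp add: cond_def)
qed

lemma cond_bounds:
  assumes D: "Delta_Omega \<nu>"
  shows "0 \<le> cond \<nu> h a" "cond \<nu> h a \<le> 1"
proof -
  have m: "measure \<nu> (cyl (h @ [a])) \<le> measure \<nu> (cyl h)" "0 \<le> measure \<nu> (cyl (h @ [a]))"
    "0 \<le> measure \<nu> (cyl h)"
    using meas_mono[OF D, of h a] by auto
  show "0 \<le> cond \<nu> h a" unfolding cond_def using m by simp
  show "cond \<nu> h a \<le> 1"
  proof (cases "measure \<nu> (cyl h) = 0")
    case True then show ?thesis by (simp add: cond_def)
  next
    case False
    then have "0 < measure \<nu> (cyl h)" using m by linarith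
    then show ?thesis unfolding cond_def using m by simp
  qed
qed

lemma supdist_ge:
  fixes p q :: "'a::finite \<Rightarrow> real"
  shows "\<bar>p a - q a\<bar> \<le> supdist p q"
  unfolding supdist_def by (rule Max_ge) auto

lemma supdist_nonneg:
  fixes p q :: "'a::finite \<Rightarrow> real"
  shows "0 \<le> supdist p q"
  using supdist_ge[of p undefined q] by linarith

lemma supdist_le1:
  fixes p q :: "'a::finite \<Rightarrow> real"
  assumes "\<And>a. \<bar>p a - q a\<bar> \<le> 1"
  shows "supdist p q \<le> 1"
  unfolding supdist_def using assms by (subst Max_le_iff) auto


lemma opt_local:
  fixes \<mu>t :: "(nat \<Rightarrow> 'a::finite) measure"
  assumes Dt: "Delta_Omega \<mu>t" and opt: "eps_optimal 0 N \<mu>t D r fs" and sf: "strategy D f"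
    and sfs: "strategy D fs" and hN: "length h < N"
  shows "(\<Sum>a\<in>UNIV. (r a (f h) - r a (fs h)) * measure \<mu>t (cyl (h @ [a]))) \<le> 0"
proof -
  define f' where "f' = fs(h := f h)"
  define P where "P h' a = measure \<mu>t (cyl (h' @ [a]))" for h' a
  define X where "X = (\<Sum>a\<in>UNIV. (r a (f h) - r a (fs h)) * P h a)"
  define S where "S g = (\<Sum>n<N. \<Sum>h'\<in>L n. \<Sum>a\<in>UNIV. r a (g h') * P h' a)" for g
  have "strategy D f'" using sf sfs unfolding strategy_def f'_def by auto
  then have "V N \<mu>t r f' \<le> V N \<mu>t r fs" using opt unfolding eps_optimal_def by auto
  then have le: "(1 / real N) * S f' \<le> (1 / real N) * S fs"
    unfolding S_def P_def V_eq[OF Dt] .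
  have Npos: "0 < real N" using hN by simp
  from le Npos have le2: "S f' \<le> S fs" by (simp add: divide_le_cancel)
  have inner: "(\<Sum>a\<in>UNIV. r a (f' h') * P h' a) = (\<Sum>a\<in>UNIV. r a (fs h') * P h' a) + (if h' = h then X else 0)"
    for h'
  proof (cases "h' = h")
    case True
    then show ?thesis by (simp add: f'_def X_def algebra_simps sum.distrib sum_subtractf)
  next
    case False
    then show ?thesis by (simp add: f'_def)
  qed
  have mid: "(\<Sum>h'\<in>L n. (if h' = h then X else (0::real))) = (if n = length h then X else 0)" for n
    by (subst sum.delta[OF finite_L]) (auto simp: L_def)
  have "S f' = S fs + (\<Sum>n<N. \<Sum>h'\<in>L n. (if h' = h then X else 0))"
    unfolding S_def inner by (simp add: sum.distrib)
  also have "\<dots> = S fs + X"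
    unfolding mid using hN by (simp add: sum.delta')
  finally have "S f' = S fs + X" .
  with le2 have "X \<le> 0" by simp
  then show ?thesis unfolding X_def P_def .
qed


lemma local_bound:
  fixes \<mu>t \<mu> :: "(nat \<Rightarrow> 'a::finite) measure"
  assumes Dt: "Delta_Omega \<mu>t" and D: "Delta_Omega \<mu>"
    and opt: "eps_optimal 0 N \<mu>t D r fs" and sf: "strategy D f"
    and sfs: "strategy D fs" and hN: "length h < N"
    and r01: "\<forall>a. \<forall>d\<in>D. 0 \<le> r a d \<and> r a d \<le> 1"
  shows "(\<Sum>a\<in>UNIV. (r a (f h) - r a (fs h)) * measure \<mu> (cyl (h @ [a])))
          \<le> measure \<mu> (cyl h) * (real CARD('a) * supdist (cond \<mu>t h) (cond \<mu> h))"
proof -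
  define \<Delta> where "\<Delta> a = r a (f h) - r a (fs h)" for a
  define s where "s = supdist (cond \<mu>t h) (cond \<mu> h)"
  have Dab: "\<bar>\<Delta> a\<bar> \<le> 1" for a
  proof -
    have "f h \<in> D" "fs h \<in> D" using sf sfs unfolding strategy_def by auto
    then have "0 \<le> r a (f h)" "r a (f h) \<le> 1" "0 \<le> r a (fs h)" "r a (fs h) \<le> 1" using r01 by auto
    then show ?thesis unfolding \<Delta>_def abs_le_iff by linarith
  qed
  have t1: "(\<Sum>a\<in>UNIV. \<Delta> a * cond \<mu>t h a) \<le> 0"
  proof -
    have "(\<Sum>a\<in>UNIV. \<Delta> a * cond \<mu>t h a) = (\<Sum>a\<in>UNIV. \<Delta> a * measure \<mu>t (cyl (h @ [a]))) / measure \<mu>t (cyl h)"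
      by (simp add: cond_def sum_divide_distrib)
    also have "\<dots> \<le> 0"
      using opt_local[OF Dt opt sf sfs hN] by (intro divide_nonpos_nonneg) (simp_all add: \<Delta>_def)
    finally show ?thesis .
  qed
  have t2: "(\<Sum>a\<in>UNIV. \<Delta> a * (cond \<mu> h a - cond \<mu>t h a)) \<le> real CARD('a) * s"
  proof -
    have "(\<Sum>a\<in>UNIV. \<Delta> a * (cond \<mu> h a - cond \<mu>t h a)) \<le> (\<Sum>a\<in>(UNIV::'a set). s)"
    proof (rule sum_mono)
      fix a :: 'a
      have "\<Delta> a * (cond \<mu> h a - cond \<mu>t h a) \<le> \<bar>\<Delta> a\<bar> * \<bar>cond \<mu> h a - cond \<mu>t h a\<bar>"
        by (metis abs_ge_self abs_mult)
      also have "\<dots> \<le> 1 * s"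
        using Dab[of a] supdist_ge[of "cond \<mu>t h" a "cond \<mu> h"] unfolding s_def
        by (intro mult_mono) auto
      finally show "\<Delta> a * (cond \<mu> h a - cond \<mu>t h a) \<le> s" by simp
    qed
    then show ?thesis by simp
  qed
  have "(\<Sum>a\<in>UNIV. \<Delta> a * measure \<mu> (cyl (h @ [a]))) = measure \<mu> (cyl h) * (\<Sum>a\<in>UNIV. \<Delta> a * cond \<mu> h a)"
    by (simp add: meas_cond[OF D] sum_distrib_left algebra_simps)
  also have "(\<Sum>a\<in>UNIV. \<Delta> a * cond \<mu> h a) = (\<Sum>a\<in>UNIV. \<Delta> a * (cond \<mu> h a - cond \<mu>t h a)) + (\<Sum>a\<in>UNIV. \<Delta> a * cond \<mu>t h a)"
    by (simp add: sum.distrib[symmetric] algebra_simps)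
  also have "measure \<mu> (cyl h) * \<dots> \<le> measure \<mu> (cyl h) * (real CARD('a) * s)"
    using t1 t2 by (intro mult_left_mono) auto
  finally show ?thesis unfolding \<Delta>_def s_def .
qed

lemma V_diff_bound:
  fixes \<mu>t \<mu> :: "(nat \<Rightarrow> 'a::finite) measure"
  assumes Dt: "Delta_Omega \<mu>t" and D: "Delta_Omega \<mu>"
    and opt: "eps_optimal 0 N \<mu>t D r fs" and sf: "strategy D f"
    and sfs: "strategy D fs"
    and r01: "\<forall>a. \<forall>d\<in>D. 0 \<le> r a d \<and> r a d \<le> 1"
  shows "V N \<mu> r f - V N \<mu> r fs \<le> real CARD('a) *
     (\<integral>\<omega>. (1 / real N) * (\<Sum>n<N. supdist (cond \<mu>t (hist n \<omega>)) (cond \<mu> (hist n \<omega>))) \<partial>\<mu>)"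
proof -
  define s where "s h = supdist (cond \<mu>t h) (cond \<mu> h)" for h
  define P where "P h' a = measure \<mu> (cyl (h' @ [a]))" for h' a
  have "V N \<mu> r f - V N \<mu> r fs = (1 / real N) *
      (\<Sum>n<N. \<Sum>h\<in>L n. \<Sum>a\<in>UNIV. (r a (f h) - r a (fs h)) * P h a)"
    unfolding V_eq[OF D] P_def by (simp add: sum_subtractf left_diff_distrib diff_divide_distrib)
  also have "\<dots> \<le> (1 / real N) * (\<Sum>n<N. \<Sum>h\<in>L n. measure \<mu> (cyl h) * (real CARD('a) * s h))"
  proof (intro mult_left_mono sum_mono)
    fix n and h :: "'a list" assume "n \<in> {..<N}" "h \<in> L n"
    then have "length h < N" by (simp add: L_def)
    then show "(\<Sum>a\<in>UNIV. (r a (f h) - r a (fs h)) * P h a) \<le> measure \<mu> (cyl h) * (real CARD('a) * s h)"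
      unfolding P_def s_def by (rule local_bound[OF Dt D opt sf sfs _ r01])
  qed simp
  also have "\<dots> = real CARD('a) * ((1 / real N) * (\<Sum>n<N. \<integral>\<omega>. s (hist n \<omega>) \<partial>\<mu>))"
    by (simp add: int_G(2)[OF D] sum_distrib_left algebra_simps)
  also have "(\<Sum>n<N. \<integral>\<omega>. s (hist n \<omega>) \<partial>\<mu>) = (\<integral>\<omega>. (\<Sum>n<N. s (hist n \<omega>)) \<partial>\<mu>)"
    by (rule Bochner_Integration.integral_sum[where I="{..<N}" and f="\<lambda>(n::nat) \<omega>. s (hist n \<omega>)", symmetric])
       (rule int_G(1)[OF D])
  also have "(1 / real N) * \<dots> = (\<integral>\<omega>. (1 / real N) * (\<Sum>n<N. s (hist n \<omega>)) \<partial>\<mu>)"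
    by simp
  finally show ?thesis unfolding s_def .
qed


lemma s_bounds:
  fixes \<mu>t \<mu> :: "(nat \<Rightarrow> 'a::finite) measure"
  assumes Dt: "Delta_Omega \<mu>t" and D: "Delta_Omega \<mu>"
  shows "0 \<le> supdist (cond \<mu>t h) (cond \<mu> h)" "supdist (cond \<mu>t h) (cond \<mu> h) \<le> 1"
proof -
  show "0 \<le> supdist (cond \<mu>t h) (cond \<mu> h)" by (rule supdist_nonneg)
  have "\<bar>cond \<mu>t h a - cond \<mu> h a\<bar> \<le> 1" for a
    using cond_bounds[OF Dt, of h a] cond_bounds[OF D, of h a] unfolding abs_le_iff by linarith
  then show "supdist (cond \<mu>t h) (cond \<mu> h) \<le> 1" by (rule supdist_le1)
qed

lemma avg_bound:
  fixes s :: "nat \<Rightarrow> real"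
  assumes "\<And>n. 0 \<le> s n" "\<And>n. s n \<le> 1"
  shows "norm ((1 / real N) * (\<Sum>n<N. s n)) \<le> 1"
proof -
  have "0 \<le> (\<Sum>n<N. s n)" using assms by (simp add: sum_nonneg)
  moreover have "(\<Sum>n<N. s n) \<le> real N"
    using sum_mono[of "{..<N}" s "\<lambda>_. 1"] assms by simp
  ultimately show ?thesis
    by (cases "N = 0") (auto simp: divide_le_eq_1)
qed

lemma E_lim:
  fixes \<mu>t \<mu> :: "(nat \<Rightarrow> 'a::finite) measure"
  assumes Dt: "Delta_Omega \<mu>t" and D: "Delta_Omega \<mu>" and wm: "weakly_merges \<mu>t \<mu>"
  shows "(\<lambda>N. \<integral>\<omega>. (1 / real N) * (\<Sum>n<N. supdist (cond \<mu>t (hist n \<omega>)) (cond \<mu> (hist n \<omega>))) \<partial>\<mu>) \<longlonglongrightarrow> 0"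
proof -
  define s where "s h = supdist (cond \<mu>t h) (cond \<mu> h)" for h :: "'a list"
  have intg: "integrable \<mu> (\<lambda>\<omega>. (1 / real N) * (\<Sum>n<N. s (hist n \<omega>)))" for N
  proof -
    have "integrable \<mu> (\<lambda>\<omega>. \<Sum>n<N. s (hist n \<omega>))"
      by (rule Bochner_Integration.integrable_sum) (rule int_G(1)[OF D])
    then show ?thesis by simp
  qed
  have ps: "prob_space \<mu>" by (rule Delta_prob[OF D])
  have "(\<lambda>N. \<integral>\<omega>. (1 / real N) * (\<Sum>n<N. s (hist n \<omega>)) \<partial>\<mu>) \<longlonglongrightarrow> (\<integral>\<omega>. 0 \<partial>\<mu>)"
  proof (rule integral_dominated_convergence[where w="\<lambda>_. 1"])
    show "(\<lambda>\<omega>. 0::real) \<in> borel_measurable \<mu>" by simp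
    show "(\<lambda>\<omega>. (1 / real N) * (\<Sum>n<N. s (hist n \<omega>))) \<in> borel_measurable \<mu>" for N
      using intg by (rule borel_measurable_integrable)
    show "integrable \<mu> (\<lambda>_. 1::real)" using prob_space.finite_measure[OF ps] by (rule finite_measure.integrable_const)
    show "AE \<omega> in \<mu>. (\<lambda>N. (1 / real N) * (\<Sum>n<N. s (hist n \<omega>))) \<longlonglongrightarrow> 0"
      using wm unfolding weakly_merges_def s_def .
    show "AE \<omega> in \<mu>. norm ((1 / real N) * (\<Sum>n<N. s (hist n \<omega>))) \<le> 1" for N
      by (rule AE_I2, rule avg_bound) (auto simp: s_def s_bounds[OF Dt D])
  qed
  then show ?thesis unfolding s_def by simp
qed

theorem proposition1:
  fixes \<mu>t \<mu> :: "(nat \<Rightarrow> 'a::finite) measure"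
  assumes "Delta_Omega \<mu>t" and "Delta_Omega \<mu>" and "weakly_merges \<mu>t \<mu>"
  shows "\<forall>\<epsilon>>0. \<exists>N0::nat. \<forall>N>N0. \<forall>(D::nat set) (r::'a \<Rightarrow> nat \<Rightarrow> real) fs.
           finite D \<longrightarrow> (\<forall>a. \<forall>d\<in>D. 0 \<le> r a d \<and> r a d \<le> 1) \<longrightarrow> strategy D fs \<longrightarrow>
           eps_optimal 0 N \<mu>t D r fs \<longrightarrow> eps_optimal \<epsilon> N \<mu> D r fs"
proof (intro allI impI)
  fix \<epsilon> :: real assume eps: "\<epsilon> > 0"
  note Dt = assms(1) and D = assms(2)
  define E where "E N = (\<integral>\<omega>. (1 / real N) * (\<Sum>n<N. supdist (cond \<mu>t (hist n \<omega>)) (cond \<mu> (hist n \<omega>))) \<partial>\<mu>)" for N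
  have Elim: "E \<longlonglongrightarrow> 0" unfolding E_def by (rule E_lim[OF assms])
  define K where "K = real CARD('a)"
  have Kpos: "K > 0" unfolding K_def by simp
  from Elim have "\<exists>N0. \<forall>N\<ge>N0. norm (E N - 0) < \<epsilon> / K"
    using Kpos eps by (intro LIMSEQ_D) auto
  then obtain N0 where N0: "\<And>N. N \<ge> N0 \<Longrightarrow> \<bar>E N\<bar> < \<epsilon> / K" by auto
  show "\<exists>N0::nat. \<forall>N>N0. \<forall>(D::nat set) (r::'a \<Rightarrow> nat \<Rightarrow> real) fs.
           finite D \<longrightarrow> (\<forall>a. \<forall>d\<in>D. 0 \<le> r a d \<and> r a d \<le> 1) \<longrightarrow> strategy D fs \<longrightarrow>
           eps_optimal 0 N \<mu>t D r fs \<longrightarrow> eps_optimal \<epsilon> N \<mu> D r fs"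
  proof (intro exI[of _ N0] allI impI)
    fix N :: nat and D :: "nat set" and r :: "'a \<Rightarrow> nat \<Rightarrow> real" and fs :: "'a list \<Rightarrow> nat"
    assume NN: "N0 < N" and fD: "finite D" and r01: "\<forall>a. \<forall>d\<in>D. 0 \<le> r a d \<and> r a d \<le> (1::real)"
      and sfs: "strategy D fs" and opt: "eps_optimal 0 N \<mu>t D r fs"
    show "eps_optimal \<epsilon> N \<mu> D r fs"
      unfolding eps_optimal_def
    proof (intro allI impI)
      fix f :: "'a list \<Rightarrow> nat" assume sf: "strategy D f"
      have "V N \<mu> r f - V N \<mu> r fs \<le> K * E N"
        using V_diff_bound[OF Dt D opt sf sfs r01] unfolding K_def E_def .
      also have "\<dots> \<le> K * \<bar>E N\<bar>" using Kpos by (intro mult_left_mono) auto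
      also have "\<dots> < K * (\<epsilon> / K)" using Kpos N0[of N] NN by (intro mult_strict_left_mono) auto
      also have "\<dots> = \<epsilon>" using Kpos by simp
      finally show "V N \<mu> r f \<le> V N \<mu> r fs + \<epsilon>" by simp
    qed
  qed
qed

end
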